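(* Let $p$ be a prime, $k\ge1$, and $g\in{\rm AGL}(k,p)$, acting on $\mathbb F_p^k$, written as $g(x)=Ax+e$ with $A\in{\rm GL}(k,p)$ and $e\in\mathbb F_p^k$. Then $g$ is an imprimitive permutation of $\mathbb F_p^k$ if and only if the characteristic polynomial of $A$ is reducible over $\mathbb F_p$.
   Context: A permutation $g$ of a finite set $\Omega$ with $|\Omega|=n$ is called imprimitive if it preserves a partition of $\Omega$ into blocks of equal size $m$ with $1<m<n$ (equivalently, it lies in a transitive imprimitive subgroup of ${\rm Sym}(\Omega)$); otherwise it is primitive. *)

theory Defs
  imports "Berlekamp_Zassenhaus.Finite_Field" "Jordan_Normal_Form.Char_Poly" "HOL-Library.Disjoint_Sets"
begin

definition imprimitive_perm :: "('a \<Rightarrow> 'a) \<Rightarrow> 'a set \<Rightarrow> bool" where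
  "imprimitive_perm g \<Omega> \<longleftrightarrow>
     (\<exists>P m. partition_on \<Omega> P \<and> (\<forall>B\<in>P. card B = m) \<and> 1 < m \<and> m < card \<Omega>
            \<and> (\<forall>B\<in>P. g ` B \<in> P))"

end

theory Submission
  imports Defs "Berlekamp_Zassenhaus.Distinct_Degree_Factorization" "Berlekamp_Zassenhaus.Berlekamp_Type_Based"
begin

definition meval :: "nat \<Rightarrow> 'a::comm_ring_1 mat \<Rightarrow> 'a poly \<Rightarrow> 'a mat" where
  "meval n A p = fold_coeffs (\<lambda>a M. a \<cdot>\<^sub>m 1\<^sub>m n + A * M) p (0\<^sub>m n n)"

lemma meval_0[simp]: "meval n A 0 = 0\<^sub>m n n"
  by (simp add: meval_def)

lemma meval_pCons: assumes A: "A \<in> carrier_mat n n"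
  shows "meval n A (pCons a p) = a \<cdot>\<^sub>m 1\<^sub>m n + A * meval n A p"
proof (cases "p = 0 \<and> a = 0")
  case True
  have "0 \<cdot>\<^sub>m 1\<^sub>m n + A * 0\<^sub>m n n = (0\<^sub>m n n :: 'a mat)"
    using A by (intro eq_matI) auto
  then show ?thesis using True by simp
next
  case False
  then show ?thesis by (auto simp: meval_def)
qed

lemma meval_carrier[simp]: assumes A: "A \<in> carrier_mat n n"
  shows "meval n A p \<in> carrier_mat n n"
  by (induct p, auto simp: meval_pCons[OF A] A intro!: add_carrier_mat mult_carrier_mat[OF A])

lemma meval_dim[simp]: assumes A: "A \<in> carrier_mat n n"
  shows "dim_row (meval n A p) = n" "dim_col (meval n A p) = n"
  using meval_carrier[OF A, of p] by auto

lemma zero_smult_add: assumes "X \<in> carrier_mat n n"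
  shows "(0::'a::comm_ring_1) \<cdot>\<^sub>m 1\<^sub>m n + X = X"
  using assms by (intro eq_matI) auto

lemma meval_add: assumes A: "A \<in> carrier_mat n n"
  shows "meval n A (p + q) = meval n A p + meval n A q"
proof (induct p arbitrary: q)
  case 0 then show ?case using A by (intro eq_matI) auto
next
  case (pCons a p q)
  obtain b q' where q: "q = pCons b q'" by (cases q)
  have "meval n A (pCons a p + q) = (a + b) \<cdot>\<^sub>m 1\<^sub>m n + (A * meval n A p + A * meval n A q')"
    using mult_add_distrib_mat[OF A meval_carrier[OF A] meval_carrier[OF A], of p q']
    by (simp add: q meval_pCons[OF A] pCons(2))
  also have "\<dots> = meval n A (pCons a p) + meval n A q"
    unfolding q meval_pCons[OF A]
    using A by (intro eq_matI) (auto simp: algebra_simps meval_dim[OF A])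
  finally show ?case .
qed

lemma meval_smult: assumes A: "A \<in> carrier_mat n n"
  shows "meval n A (smult c p) = c \<cdot>\<^sub>m meval n A p"
proof (induct p)
  case 0 then show ?case using A by (intro eq_matI) auto
next
  case (pCons a p)
  have "meval n A (smult c (pCons a p)) = (c * a) \<cdot>\<^sub>m 1\<^sub>m n + c \<cdot>\<^sub>m (A * meval n A p)"
    using mult_smult_distrib[OF A meval_carrier[OF A], where k=c]
    by (simp add: meval_pCons[OF A] pCons(2))
  also have "\<dots> = c \<cdot>\<^sub>m meval n A (pCons a p)"
    unfolding meval_pCons[OF A]
    using A by (intro eq_matI) (auto simp: algebra_simps meval_dim[OF A])
  finally show ?case .
qed

lemma meval_mult: assumes A: "A \<in> carrier_mat n n"
  shows "meval n A (p * q) = meval n A p * meval n A q"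
proof (induct p)
  case 0 then show ?case using A by (simp add: left_mult_zero_mat)
next
  case (pCons a p)
  have "meval n A (pCons a p * q) = a \<cdot>\<^sub>m meval n A q + (A * meval n A p) * meval n A q"
    using assoc_mult_mat[OF A meval_carrier[OF A] meval_carrier[OF A], of p q]
    by (simp add: meval_pCons[OF A] pCons(2) meval_add[OF A] meval_smult[OF A] zero_smult_add[OF mult_carrier_mat[OF A mult_carrier_mat[OF meval_carrier[OF A] meval_carrier[OF A]]]])
  also have "\<dots> = meval n A (pCons a p) * meval n A q"
    unfolding meval_pCons[OF A]
    by (subst add_mult_distrib_mat[of _ n n], auto simp: A mult_smult_assoc_mat[of _ n n _ n] mult_carrier_mat[OF A meval_carrier[OF A]])
  finally show ?case .
qed
lemma meval_const: assumes A: "A \<in> carrier_mat n n"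
  shows "meval n A [:c:] = c \<cdot>\<^sub>m 1\<^sub>m n"
  using A by (simp add: meval_pCons[OF A])

lemma meval_1: assumes A: "A \<in> carrier_mat n n"
  shows "meval n A 1 = 1\<^sub>m n"
proof -
  have "meval n A 1 = meval n A [:1:]" by simp
  also have "\<dots> = 1 \<cdot>\<^sub>m 1\<^sub>m n" by (rule meval_const[OF A])
  also have "\<dots> = 1\<^sub>m n" by (intro eq_matI) auto
  finally show ?thesis .
qed

lemma meval_x: assumes A: "A \<in> carrier_mat n n"
  shows "meval n A (monom 1 1) = A"
proof -
  have "monom 1 1 = pCons 0 (1::'a poly)" by (simp add: monom_Suc)
  then show ?thesis using A
    by (simp add: meval_pCons[OF A] meval_1[OF A] zero_smult_add)
qed

lemma meval_uminus: assumes A: "A \<in> carrier_mat n n"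
  shows "meval n A (- p) = - meval n A p"
proof -
  have "meval n A (- p) = meval n A (smult (-1) p)" by simp
  also have "\<dots> = (-1) \<cdot>\<^sub>m meval n A p" by (rule meval_smult[OF A])
  also have "\<dots> = - meval n A p" using A by (intro eq_matI) auto
  finally show ?thesis .
qed

lemma meval_diff: assumes A: "A \<in> carrier_mat n n"
  shows "meval n A (p - q) = meval n A p - meval n A q"
proof -
  have "meval n A (p - q) = meval n A (p + (- q))" by (simp only: diff_conv_add_uminus)
  also have "\<dots> = meval n A p + meval n A (- q)" by (rule meval_add[OF A])
  also have "\<dots> = meval n A p + - meval n A q" by (simp only: meval_uminus[OF A])
  also have "\<dots> = meval n A p - meval n A q" using A by (intro eq_matI) auto
  finally show ?thesis .
qed

lemma pow_mat_Suc_left: assumes A: "A \<in> carrier_mat n n"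
  shows "A ^\<^sub>m Suc l = A * A ^\<^sub>m l"
proof (induct l)
  case 0 then show ?case using A by simp
next
  case (Suc l)
  have "A ^\<^sub>m Suc (Suc l) = (A * A ^\<^sub>m l) * A" using Suc by simp
  also have "\<dots> = A * (A ^\<^sub>m l * A)" using A by (simp add: assoc_mult_mat[of _ n n _ n _ n])
  finally show ?case by simp
qed

lemma pow_mat_add: assumes A: "A \<in> carrier_mat n n"
  shows "A ^\<^sub>m (a + b) = A ^\<^sub>m a * A ^\<^sub>m b"
proof (induct b)
  case 0 then show ?case using A by simp
next
  case (Suc b)
  have "A ^\<^sub>m (a + Suc b) = A ^\<^sub>m (a + b) * A" by simp
  also have "\<dots> = (A ^\<^sub>m a * A ^\<^sub>m b) * A" by (simp only: Suc)
  also have "\<dots> = A ^\<^sub>m a * (A ^\<^sub>m b * A)" by (rule assoc_mult_mat[of _ n n _ n _ n]) (use A in auto)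
  also have "\<dots> = A ^\<^sub>m a * A ^\<^sub>m Suc b" by simp
  finally show ?case .
qed

lemma pow_mat_mult: assumes A: "A \<in> carrier_mat n n"
  shows "A ^\<^sub>m (a * b) = (A ^\<^sub>m a) ^\<^sub>m b"
proof (induct b)
  case 0 then show ?case using A by simp
next
  case (Suc b)
  have "A ^\<^sub>m (a * Suc b) = A ^\<^sub>m (a * b + a)" by (metis add.commute mult_Suc_right)
  also have "\<dots> = A ^\<^sub>m (a * b) * A ^\<^sub>m a" by (rule pow_mat_add[OF A])
  also have "\<dots> = (A ^\<^sub>m a) ^\<^sub>m b * A ^\<^sub>m a" by (simp only: Suc)
  also have "\<dots> = (A ^\<^sub>m a) ^\<^sub>m Suc b" by simp
  finally show ?case .
qed

lemma meval_power: assumes A: "A \<in> carrier_mat n n"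
  shows "meval n A (p ^ i) = meval n A p ^\<^sub>m i"
proof (induct i)
  case 0 then show ?case using A by (simp add: meval_1)
next
  case (Suc i)
  have "meval n A (p ^ Suc i) = meval n A (p ^ i * p)" by (simp only: power_Suc2)
  also have "\<dots> = meval n A (p ^ i) * meval n A p" by (rule meval_mult[OF A])
  also have "\<dots> = meval n A p ^\<^sub>m Suc i" by (simp only: Suc pow_mat.simps)
  finally show ?case .
qed

lemma meval_entry: assumes A: "A \<in> carrier_mat n n" and j: "j < n"
  shows "(\<forall>l\<ge>N. coeff p l = 0) \<Longrightarrow> i < n \<Longrightarrow> meval n A p $$ (i,j) = (\<Sum>l<N. coeff p l * (A ^\<^sub>m l) $$ (i,j))"
proof (induct p arbitrary: N i)
  case 0 then show ?case using j by simp
next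
  case (pCons a p N i)
    note ij = pCons(4) j
  show ?case
  proof (cases N)
    case 0
    with pCons(3) have "pCons a p = 0" by (intro poly_eqI) auto
    with pCons(1) show ?thesis by auto
  next
    case (Suc N')
    have c: "\<forall>l\<ge>N'. coeff p l = 0" using pCons(3) Suc
      by (metis Suc_le_mono coeff_pCons_Suc)
    have IH: "\<And>t. t < n \<Longrightarrow> meval n A p $$ (t,j) = (\<Sum>l<N'. coeff p l * (A ^\<^sub>m l) $$ (t,j))"
      using pCons(2)[OF c] by simp
    have "meval n A (pCons a p) $$ (i,j) = a * (1\<^sub>m n) $$ (i,j) + (\<Sum>t<n. A $$ (i,t) * meval n A p $$ (t,j))"
      using A ij by (simp add: meval_pCons[OF A] scalar_prod_def lessThan_atLeast0)
    also have "(\<Sum>t<n. A $$ (i,t) * meval n A p $$ (t,j)) = (\<Sum>t<n. \<Sum>l<N'. A $$ (i,t) * (coeff p l * (A ^\<^sub>m l) $$ (t,j)))"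
      by (simp add: IH sum_distrib_left)
    also have "\<dots> = (\<Sum>l<N'. \<Sum>t<n. A $$ (i,t) * (coeff p l * (A ^\<^sub>m l) $$ (t,j)))"
      by (rule sum.swap)
    also have "\<dots> = (\<Sum>l<N'. coeff p l * (A ^\<^sub>m Suc l) $$ (i,j))"
      using A ij
      by (intro sum.cong refl) (simp add: pow_mat_Suc_left[OF A] scalar_prod_def lessThan_atLeast0 sum_distrib_left algebra_simps del: pow_mat.simps(2))
    finally have L: "meval n A (pCons a p) $$ (i,j) = a * (1\<^sub>m n) $$ (i,j) + (\<Sum>l<N'. coeff p l * (A ^\<^sub>m Suc l) $$ (i,j))" .
    have R: "(\<Sum>l<Suc N'. coeff (pCons a p) l * (A ^\<^sub>m l) $$ (i,j)) = coeff (pCons a p) 0 * (A ^\<^sub>m 0) $$ (i,j) + (\<Sum>l<N'. coeff (pCons a p) (Suc l) * (A ^\<^sub>m Suc l) $$ (i,j))"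
      by (rule sum.lessThan_Suc_shift)
    show ?thesis unfolding Suc R L using A ij by (simp del: pow_mat.simps(2))
  qed
qed

lemma pow_Suc_entry: assumes A: "A \<in> carrier_mat n n" and tb: "t < n" "b < n"
  shows "(A ^\<^sub>m Suc l) $$ (t,b) = (\<Sum>s<n. A $$ (t,s) * (A ^\<^sub>m l) $$ (s,b))"
  unfolding pow_mat_Suc_left[OF A] using A tb
  by (simp add: scalar_prod_def lessThan_atLeast0 del: pow_mat.simps(2))

lemma coeff_mult_x: fixes p :: "'a::comm_ring_1 poly"
  shows "coeff (p * [:0,1:]) l = (if l = 0 then 0 else coeff p (l - 1))"
  by (cases l) (auto simp: mult_pCons_right)

lemma coeff_pCons0_if: "coeff (pCons 0 p) l = (if l = 0 then 0 else coeff p (l - 1))"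
  by (cases l) auto

lemma cayley_hamilton: fixes A :: "'a::comm_ring_1 mat"
  assumes A: "A \<in> carrier_mat n n"
  shows "meval n A (char_poly A) = 0\<^sub>m n n"
proof -
  define C where "C = char_poly_matrix A"
  define M where "M = adj_mat C"
  have C: "C \<in> carrier_mat n n" unfolding C_def using A by simp
  have M: "M \<in> carrier_mat n n" unfolding M_def using adj_mat(1)[OF C] .
  have MC: "M * C = char_poly A \<cdot>\<^sub>m 1\<^sub>m n" unfolding M_def char_poly_def C_def[symmetric]
    using adj_mat(3)[OF C] .
  have Centry: "C $$ (t,b) = (if t = b then [:0,1:] else 0) + [:- A $$ (t,b):]" if "t < n" "b < n" for t b
    unfolding C_def char_poly_matrix_def using A that by auto
  have key: "(if a = b then coeff (char_poly A) l else 0) = (if l = 0 then 0 else coeff (M $$ (a,b)) (l-1)) - (\<Sum>t<n. coeff (M $$ (a,t)) l * A $$ (t,b))"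
    if ab: "a < n" "b < n" for a b l
  proof -
    have "(M * C) $$ (a,b) = (\<Sum>t<n. M $$ (a,t) * C $$ (t,b))"
      using M C ab by (simp add: scalar_prod_def lessThan_atLeast0)
    also have "\<dots> = (\<Sum>t<n. (if t = b then M $$ (a,t) * [:0,1:] else 0) - smult (A $$ (t,b)) (M $$ (a,t)))"
      by (intro sum.cong refl) (auto simp: Centry ab distrib_left mult_pCons_right)
    also have "\<dots> = M $$ (a,b) * [:0,1:] - (\<Sum>t<n. smult (A $$ (t,b)) (M $$ (a,t)))"
      using ab by (simp add: sum_subtractf)
    finally have "coeff ((M * C) $$ (a,b)) l = coeff (M $$ (a,b) * [:0,1:]) l - (\<Sum>t<n. A $$ (t,b) * coeff (M $$ (a,t)) l)"
      by (simp add: coeff_sum)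
    moreover have "(M * C) $$ (a,b) = (if a = b then char_poly A else 0)"
      unfolding MC using ab by simp
    ultimately show ?thesis by (auto simp: coeff_mult_x coeff_pCons0_if algebra_simps)
  qed
  define D where "D = (\<Sum>a<n. \<Sum>s<n. degree (M $$ (a,s)))"
  define N where "N = Suc (Suc (n + D))"
  have deg: "degree (M $$ (a,s)) \<le> D" if "a < n" "s < n" for a s
  proof -
    have "degree (M $$ (a,s)) \<le> (\<Sum>s<n. degree (M $$ (a,s)))"
      by (rule member_le_sum) (use that in auto)
    also have "\<dots> \<le> D" unfolding D_def
      by (rule member_le_sum[where f = "\<lambda>a. \<Sum>s<n. degree (M $$ (a,s))"]) (use that in auto)
    finally show ?thesis .
  qed
  have coeffM0: "coeff (M $$ (a,s)) (Suc (n + D)) = 0" if "a < n" "s < n" for a s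
    using deg[OF that] by (intro coeff_eq_0) auto
  have chi0: "\<forall>l\<ge>N. coeff (char_poly A) l = 0"
    using degree_monic_char_poly[OF A] unfolding N_def by (auto intro: coeff_eq_0)
  show ?thesis
  proof (rule eq_matI)
    fix a b assume a: "a < dim_row (0\<^sub>m n n :: 'a mat)" and b: "b < dim_col (0\<^sub>m n n :: 'a mat)"
    then have a: "a < n" and b: "b < n" by auto
    define U where "U l = (\<Sum>s<n. (if l = 0 then 0 else coeff (M $$ (a,s)) (l-1)) * (A ^\<^sub>m l) $$ (s,b))" for l
    have tm: "coeff (char_poly A) l * (A ^\<^sub>m l) $$ (a,b) = U l - U (Suc l)" for l
    proof -
      have "coeff (char_poly A) l * (A ^\<^sub>m l) $$ (a,b) = (\<Sum>s<n. (if a = s then coeff (char_poly A) l else 0) * (A ^\<^sub>m l) $$ (s,b))"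
        using a by (simp add: if_distrib if_distribR sum.delta cong: if_cong)
      also have "\<dots> = (\<Sum>s<n. ((if l = 0 then 0 else coeff (M $$ (a,s)) (l-1)) - (\<Sum>t<n. coeff (M $$ (a,t)) l * A $$ (t,s))) * (A ^\<^sub>m l) $$ (s,b))"
        by (intro sum.cong refl) (simp add: key[OF a])
      also have "\<dots> = U l - (\<Sum>s<n. \<Sum>t<n. coeff (M $$ (a,t)) l * A $$ (t,s) * (A ^\<^sub>m l) $$ (s,b))"
        unfolding U_def by (simp add: left_diff_distrib sum_subtractf sum_distrib_right)
      also have "(\<Sum>s<n. \<Sum>t<n. coeff (M $$ (a,t)) l * A $$ (t,s) * (A ^\<^sub>m l) $$ (s,b))
          = (\<Sum>t<n. coeff (M $$ (a,t)) l * (\<Sum>s<n. A $$ (t,s) * (A ^\<^sub>m l) $$ (s,b)))"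
        by (subst sum.swap) (simp add: sum_distrib_left mult.assoc)
      also have "\<dots> = U (Suc l)"
        unfolding U_def using b by (intro sum.cong refl) (simp add: pow_Suc_entry[OF A _ b] del: pow_mat.simps(2))
      finally show ?thesis .
    qed
    have "meval n A (char_poly A) $$ (a,b) = (\<Sum>l<N. coeff (char_poly A) l * (A ^\<^sub>m l) $$ (a,b))"
      by (rule meval_entry[OF A b chi0 a])
    also have "\<dots> = (\<Sum>l<N. U l - U (Suc l))" by (simp add: tm)
    also have "\<dots> = U 0 - U N" by (rule sum_lessThan_telescope')
    also have "U 0 = 0" unfolding U_def by simp
    also have "U N = 0" unfolding U_def N_def by (simp add: coeffM0[OF a])
    finally show "meval n A (char_poly A) $$ (a,b) = 0\<^sub>m n n $$ (a,b)" using a b by simp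
  qed (use A in auto)
qed


lemma mult_zero_vec_mat: assumes "B \<in> carrier_mat m n"
  shows "B *\<^sub>v 0\<^sub>v n = 0\<^sub>v m"
  using assms by (intro eq_vecI) (auto simp: scalar_prod_def)

lemma inv_or_dvd: fixes A :: "'p::prime_card mod_ring mat"
  assumes A: "A \<in> carrier_mat n n" and irr: "irreducible (char_poly A)"
    and nd: "\<not> char_poly A dvd r"
  shows "\<exists>B \<in> carrier_mat n n. B * meval n A r = 1\<^sub>m n"
proof -
  let ?c = "char_poly A"
  have g: "gcd ?c r = 1" using irr nd
    by (metis coprime_imp_gcd_eq_1 irreducible_imp_prime_elem prime_elem_imp_coprime)
  define u where "u = fst (bezout_coefficients ?c r)"
  define w where "w = snd (bezout_coefficients ?c r)"
  have "u * ?c + w * r = 1" unfolding u_def w_def g[symmetric] by (rule bezout_coefficients_fst_snd)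
  then have "meval n A (u * ?c + w * r) = 1\<^sub>m n" by (simp add: meval_1[OF A])
  then have "meval n A u * meval n A ?c + meval n A w * meval n A r = 1\<^sub>m n"
    by (simp add: meval_add[OF A] meval_mult[OF A])
  then have "meval n A w * meval n A r = 1\<^sub>m n"
    using A by (simp add: cayley_hamilton[OF A] zero_smult_add right_mult_zero_mat)
      (metis left_add_zero_mat meval_carrier mult_carrier_mat right_mult_zero_mat)
  then show ?thesis using meval_carrier[OF A] by blast
qed

lemma dvd_meval_zero: fixes A :: "'a::comm_ring_1 mat"
  assumes A: "A \<in> carrier_mat n n" and d: "char_poly A dvd r"
  shows "meval n A r = 0\<^sub>m n n"
proof -
  obtain s where r: "r = char_poly A * s" using d by (auto elim: dvdE)
  show ?thesis unfolding r meval_mult[OF A] cayley_hamilton[OF A]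
    using A by (simp add: left_mult_zero_mat)
qed

lemma kernel_dvd: fixes A :: "'p::prime_card mod_ring mat"
  assumes A: "A \<in> carrier_mat n n" and irr: "irreducible (char_poly A)"
    and v: "v \<in> carrier_vec n" "v \<noteq> 0\<^sub>v n" and z: "meval n A r *\<^sub>v v = 0\<^sub>v n"
  shows "char_poly A dvd r"
proof (rule ccontr)
  assume "\<not> char_poly A dvd r"
  from inv_or_dvd[OF A irr this] obtain B where B: "B \<in> carrier_mat n n"
    and BR: "B * meval n A r = 1\<^sub>m n" by blast
  have "v = (B * meval n A r) *\<^sub>v v" using v by (simp add: BR)
  also have "\<dots> = B *\<^sub>v (meval n A r *\<^sub>v v)" by (rule assoc_mult_mat_vec[OF B meval_carrier[OF A] v(1)])
  also have "\<dots> = 0\<^sub>v n" using B by (simp add: z mult_zero_vec_mat)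
  finally show False using v by simp
qed

lemma kernel_zero: fixes A :: "'p::prime_card mod_ring mat"
  assumes A: "A \<in> carrier_mat n n" and irr: "irreducible (char_poly A)"
    and v: "v \<in> carrier_vec n" "v \<noteq> 0\<^sub>v n" and z: "meval n A r *\<^sub>v v = 0\<^sub>v n"
  shows "meval n A r = 0\<^sub>m n n"
  by (rule dvd_meval_zero[OF A kernel_dvd[OF A irr v z]])

lemma invertible_inv: fixes A :: "'a::comm_ring_1 mat"
  assumes A: "A \<in> carrier_mat n n" and inv: "invertible_mat A"
  shows "\<exists>B \<in> carrier_mat n n. B * A = 1\<^sub>m n \<and> A * B = 1\<^sub>m n"
proof -
  from inv obtain B where AB: "A * B = 1\<^sub>m (dim_row A)" and BA: "B * A = 1\<^sub>m (dim_row B)"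
    unfolding invertible_mat_def inverts_mat_def by auto
  have "dim_col B = n" using arg_cong[OF AB, of dim_col] A by simp
  moreover have "dim_row B = n" using arg_cong[OF BA, of dim_col] A by simp
  ultimately show ?thesis using AB BA A by (auto intro!: bexI[of _ B])
qed

lemma mat_vec_inj: fixes A :: "'a::comm_ring_1 mat"
  assumes A: "A \<in> carrier_mat n n" and inv: "invertible_mat A"
    and x: "x \<in> carrier_vec n" and y: "y \<in> carrier_vec n" and eq: "A *\<^sub>v x = A *\<^sub>v y"
  shows "x = y"
proof -
  obtain B where B: "B \<in> carrier_mat n n" and BA: "B * A = 1\<^sub>m n" using invertible_inv[OF A inv] by blast
  have "x = (B * A) *\<^sub>v x" using x BA by simp
  also have "\<dots> = B *\<^sub>v (A *\<^sub>v y)" using B A x by (simp add: eq)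
  also have "\<dots> = (B * A) *\<^sub>v y" using B A y by simp
  also have "\<dots> = y" using y BA by simp
  finally show ?thesis .
qed

lemma meval_mult_vec: fixes A :: "'a::comm_ring_1 mat"
  assumes A: "A \<in> carrier_mat n n" and v: "v \<in> carrier_vec n"
  shows "meval n A (r * s) *\<^sub>v v = meval n A r *\<^sub>v (meval n A s *\<^sub>v v)"
  by (simp add: meval_mult[OF A] assoc_mult_mat_vec[OF meval_carrier[OF A] meval_carrier[OF A] v])

lemma vec_id1: assumes "x \<in> carrier_vec k" "y \<in> carrier_vec k"
  shows "(y - x) + x = (y :: 'a::ab_group_add vec)"
  using assms by (intro eq_vecI) auto

lemma vec_id2: assumes "x \<in> carrier_vec k" "w \<in> carrier_vec k"
  shows "(w + x) - x = (w :: 'a::ab_group_add vec)"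
  using assms by (intro eq_vecI) auto

lemma vec_id3: assumes "x \<in> carrier_vec k" "y \<in> carrier_vec k" "u \<in> carrier_vec k" "z \<in> carrier_vec k"
  shows "u - y = (u - x) - ((z - x) - (z - y :: 'a::ab_group_add vec))"
  using assms by (intro eq_vecI) auto

lemma vec_id4: fixes A :: "'a::comm_ring_1 mat"
  assumes A: "A \<in> carrier_mat k k" and "x \<in> carrier_vec k" "y \<in> carrier_vec k" "e \<in> carrier_vec k"
  shows "(A *\<^sub>v y + e) - (A *\<^sub>v x + e) = A *\<^sub>v (y - x)"
proof -
  have "A *\<^sub>v (y - x) = A *\<^sub>v y - A *\<^sub>v x" using assms by (simp add: mult_minus_distrib_mat_vec)
  then show ?thesis using assms by (intro eq_vecI) auto
qed

lemma blocks_imprimitive: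
  fixes A :: "'p::prime_card mod_ring mat"
  assumes A: "A \<in> carrier_mat k k" and inv: "invertible_mat A" and e: "e \<in> carrier_vec k"
    and WV: "W \<subseteq> carrier_vec k" and W0: "0\<^sub>v k \<in> W"
    and Wd: "\<And>x y. x \<in> W \<Longrightarrow> y \<in> W \<Longrightarrow> x - y \<in> W"
    and WA: "\<And>x. x \<in> W \<Longrightarrow> A *\<^sub>v x \<in> W"
    and c1: "1 < card W" and c2: "card W < card (carrier_vec k :: 'p mod_ring vec set)"
  shows "imprimitive_perm (\<lambda>x. A *\<^sub>v x + e) (carrier_vec k)"
proof -
  let ?V = "carrier_vec k :: 'p mod_ring vec set"
  let ?g = "\<lambda>x. A *\<^sub>v x + e"
  define blk where "blk x = {y \<in> ?V. y - x \<in> W}" for x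
  have finV: "finite ?V" by simp
  have finW: "finite W" using WV finV by (rule finite_subset)
  have gV: "?g x \<in> ?V" if "x \<in> ?V" for x using A e that by simp
  have blk_img: "blk x = (\<lambda>w. w + x) ` W" if x: "x \<in> ?V" for x
  proof
    show "blk x \<subseteq> (\<lambda>w. w + x) ` W"
    proof
      fix y assume "y \<in> blk x"
      then have y: "y \<in> ?V" "y - x \<in> W" unfolding blk_def by auto
      then show "y \<in> (\<lambda>w. w + x) ` W" using vec_id1[OF x y(1)] by (intro image_eqI[of _ _ "y - x"]) auto
    qed
    show "(\<lambda>w. w + x) ` W \<subseteq> blk x"
    proof
      fix y assume "y \<in> (\<lambda>w. w + x) ` W"
      then obtain w where w: "w \<in> W" and y: "y = w + x" by auto
      have wV: "w \<in> ?V" using w WV by auto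
      show "y \<in> blk x" unfolding blk_def y using vec_id2[OF x wV] w wV x by auto
    qed
  qed
  have card_blk: "card (blk x) = card W" if x: "x \<in> ?V" for x
  proof -
    have "inj_on (\<lambda>w. w + x) W"
    proof
      fix w w' assume "w \<in> W" "w' \<in> W" "w + x = w' + x"
      then show "w = w'" using vec_id2[OF x, of w] vec_id2[OF x, of w'] WV by auto
    qed
    then show ?thesis unfolding blk_img[OF x] by (rule card_image)
  qed
  have self: "x \<in> blk x" if x: "x \<in> ?V" for x
  proof -
    have "x - x = 0\<^sub>v k" using x by (intro eq_vecI) auto
    then show ?thesis unfolding blk_def using x W0 by auto
  qed
  have eqblk: "blk x = blk y" if x: "x \<in> ?V" and y: "y \<in> ?V" and z: "z \<in> blk x" "z \<in> blk y" for x y z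
  proof -
    have zV: "z \<in> ?V" and zx: "z - x \<in> W" and zy: "z - y \<in> W" using z unfolding blk_def by auto
    have sub: "blk a \<subseteq> blk b" if a: "a \<in> ?V" and b: "b \<in> ?V" and za: "z - a \<in> W" and zb: "z - b \<in> W" for a b
    proof
      fix u assume "u \<in> blk a"
      then have u: "u \<in> ?V" "u - a \<in> W" unfolding blk_def by auto
      have "u - b = (u - a) - ((z - a) - (z - b))" by (rule vec_id3[OF a b u(1) zV])
      also have "\<dots> \<in> W" using Wd[OF u(2) Wd[OF za zb]] .
      finally show "u \<in> blk b" unfolding blk_def using u by auto
    qed
    show ?thesis using sub[OF x y zx zy] sub[OF y x zy zx] by auto
  qed
  define P where "P = blk ` ?V"
  have part: "partition_on ?V P"
    unfolding partition_on_def disjoint_def P_def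
  proof (intro conjI ballI impI)
    show "\<Union> (blk ` ?V) = ?V" using self unfolding blk_def by auto
    show "{} \<notin> blk ` ?V" using self by auto
  next
    fix B1 B2 assume "B1 \<in> blk ` ?V" "B2 \<in> blk ` ?V" "B1 \<noteq> B2"
    then obtain x y where x: "x \<in> ?V" and y: "y \<in> ?V" and B: "B1 = blk x" "B2 = blk y" by auto
    show "B1 \<inter> B2 = {}"
    proof (rule ccontr)
      assume "B1 \<inter> B2 \<noteq> {}"
      then obtain z where "z \<in> blk x" "z \<in> blk y" unfolding B by auto
      from eqblk[OF x y this] \<open>B1 \<noteq> B2\<close> show False unfolding B by simp
    qed
  qed
  have cardP: "\<forall>B\<in>P. card B = card W" unfolding P_def using card_blk by auto
  have gP: "\<forall>B\<in>P. ?g ` B \<in> P"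
  proof
    fix B assume "B \<in> P"
    then obtain x where x: "x \<in> ?V" and B: "B = blk x" unfolding P_def by auto
    have sub: "?g ` blk x \<subseteq> blk (?g x)"
    proof
      fix z assume "z \<in> ?g ` blk x"
      then obtain y where y: "y \<in> ?V" "y - x \<in> W" and z: "z = ?g y" unfolding blk_def by auto
      have "?g y - ?g x = A *\<^sub>v (y - x)" by (rule vec_id4[OF A x y(1) e])
      also have "\<dots> \<in> W" using WA[OF y(2)] .
      finally show "z \<in> blk (?g x)" unfolding blk_def z using gV[OF y(1)] by auto
    qed
    have inj: "inj_on ?g ?V"
    proof
      fix y y' assume y: "y \<in> ?V" and y': "y' \<in> ?V" and eq: "?g y = ?g y'"
      have c: "A *\<^sub>v y \<in> carrier_vec k" "A *\<^sub>v y' \<in> carrier_vec k" using A y y' by auto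
      have "A *\<^sub>v y = (A *\<^sub>v y + e) - e" using vec_id2[OF e c(1)] by simp
      also have "\<dots> = (A *\<^sub>v y' + e) - e" using eq by simp
      also have "\<dots> = A *\<^sub>v y'" using vec_id2[OF e c(2)] .
      finally have "A *\<^sub>v y = A *\<^sub>v y'" .
      then show "y = y'" by (rule mat_vec_inj[OF A inv y y'])
    qed
    have "blk x \<subseteq> ?V" unfolding blk_def by auto
    then have "card (?g ` blk x) = card (blk x)" using inj by (intro card_image) (rule inj_on_subset)
    also have "\<dots> = card (blk (?g x))" using card_blk[OF x] card_blk[OF gV[OF x]] by simp
    finally have "?g ` blk x = blk (?g x)"
      using sub by (intro card_subset_eq) (auto simp: blk_def intro: finite_subset[OF _ finV])
    then show "?g ` B \<in> P" unfolding B P_def using gV[OF x] by auto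
  qed
  show ?thesis unfolding imprimitive_perm_def
    using part cardP c1 c2 gP by blast
qed

lemma meval_vec_carrier: assumes A: "A \<in> carrier_mat n n" and v: "v \<in> carrier_vec n"
  shows "meval n A r *\<^sub>v v \<in> carrier_vec n"
  by (rule mult_mat_vec_carrier[OF meval_carrier[OF A] v])

lemma card_deg_less: "finite {r :: 'p::prime_card mod_ring poly. degree r < d} \<and> card {r :: 'p mod_ring poly. degree r < d} \<le> CARD('p) ^ d"
proof -
  let ?S = "{r :: 'p mod_ring poly. degree r < d}"
  let ?f = "\<lambda>r :: 'p mod_ring poly. vec d (coeff r)"
  have inj: "inj_on ?f ?S"
  proof
    fix r r' assume r: "r \<in> ?S" and r': "r' \<in> ?S" and eq: "?f r = ?f r'"
    show "r = r'"
    proof (rule poly_eqI)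
      fix i show "coeff r i = coeff r' i"
      proof (cases "i < d")
        case True then show ?thesis using arg_cong[OF eq, of "\<lambda>v. v $ i"] by simp
      next
        case False then show ?thesis using r r' by (auto intro!: coeff_eq_0[THEN trans, OF _ coeff_eq_0[symmetric]])
      qed
    qed
  qed
  have sub: "?f ` ?S \<subseteq> carrier_vec d" by auto
  have fin: "finite ?S" using finite_subset[OF sub finite_carrier_vec] inj finite_imageD by blast
  have "card ?S \<le> card (carrier_vec d :: 'p mod_ring vec set)" by (rule card_inj_on_le[OF inj sub finite_carrier_vec])
  then show ?thesis using fin by (simp add: card_carrier_vec)
qed

lemma dir1: fixes A :: "'p::prime_card mod_ring mat"
  assumes k: "k \<ge> 1" and A: "A \<in> carrier_mat k k" and inv: "invertible_mat A"
    and e: "e \<in> carrier_vec k" and red: "\<not> irreducible (char_poly A)"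
  shows "imprimitive_perm (\<lambda>x. A *\<^sub>v x + e) (carrier_vec k)"
proof -
  let ?c = "char_poly A"
  let ?V = "carrier_vec k :: 'p mod_ring vec set"
  have degc: "degree ?c = k" and lc: "coeff ?c k = 1" using degree_monic_char_poly[OF A] by auto
  have c0: "?c \<noteq> 0" using lc by auto
  have cu: "\<not> is_unit ?c" using is_unit_iff_degree[OF c0] degc k by auto
  obtain f h where fh: "?c = f * h" and fu: "\<not> is_unit f" and hu: "\<not> is_unit h"
    using red c0 cu unfolding irreducible_def by auto
  have f0: "f \<noteq> 0" and h0: "h \<noteq> 0" using fh c0 by auto
  have df: "degree f \<ge> 1" using is_unit_iff_degree[OF f0] fu by auto
  have dh: "degree h \<ge> 1" using is_unit_iff_degree[OF h0] hu by auto
  have dsum: "degree f + degree h = k" using degree_mult_eq[OF f0 h0] fh degc by simp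
  have "meval k A f * meval k A h = 0\<^sub>m k k"
    using cayley_hamilton[OF A] fh by (simp add: meval_mult[OF A])
  then have "det (meval k A f) * det (meval k A h) = 0"
    using det_mult[OF meval_carrier[OF A] meval_carrier[OF A], of f h] k by simp
  then have disj: "det (meval k A f) = 0 \<or> det (meval k A h) = 0" by simp
  have "\<exists>q. q \<noteq> 0 \<and> degree q \<ge> 1 \<and> degree q < k \<and> det (meval k A q) = 0"
  proof (cases "det (meval k A f) = 0")
    case True then show ?thesis using f0 df dh dsum by (intro exI[of _ f]) auto
  next
    case False then have "det (meval k A h) = 0" using disj by auto
    then show ?thesis using h0 df dh dsum by (intro exI[of _ h]) auto
  qed
  then obtain q where q0: "q \<noteq> 0" and dq1: "degree q \<ge> 1" and dqk: "degree q < k"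
      and detq: "det (meval k A q) = 0" by blast
  from detq det_0_iff_vec_prod_zero_field[OF meval_carrier[OF A]] obtain v where
    v: "v \<in> ?V" "v \<noteq> 0\<^sub>v k" and qv: "meval k A q *\<^sub>v v = 0\<^sub>v k" by blast
  define d where "d = degree q"
  define W where "W = (\<lambda>r. meval k A r *\<^sub>v v) ` {r. degree r < d}"
  have clos: "meval k A r *\<^sub>v v \<in> W" for r
  proof -
    have "meval k A r = meval k A (r div q * q + r mod q)" by simp
    also have "\<dots> = meval k A (r div q) * meval k A q + meval k A (r mod q)"
      by (simp only: meval_add[OF A] meval_mult[OF A])
    finally have "meval k A r *\<^sub>v v = (meval k A (r div q) * meval k A q) *\<^sub>v v + meval k A (r mod q) *\<^sub>v v"
      using add_mult_distrib_mat_vec[OF mult_carrier_mat[OF meval_carrier[OF A] meval_carrier[OF A]] meval_carrier[OF A] v(1)]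
      by simp
    also have "(meval k A (r div q) * meval k A q) *\<^sub>v v = 0\<^sub>v k"
      using assoc_mult_mat_vec[OF meval_carrier[OF A] meval_carrier[OF A] v(1)] qv
      by (simp add: mult_zero_vec_mat[OF meval_carrier[OF A]])
    also have "0\<^sub>v k + meval k A (r mod q) *\<^sub>v v = meval k A (r mod q) *\<^sub>v v"
      by (rule left_zero_vec, rule mult_mat_vec_carrier[OF meval_carrier[OF A] v(1)])
    finally have eq: "meval k A r *\<^sub>v v = meval k A (r mod q) *\<^sub>v v" .
    have "degree (r mod q) < d"
    proof (cases "r mod q = 0")
      case True then show ?thesis using dq1 d_def by simp
    next
      case False then show ?thesis using degree_mod_less'[OF q0 False] d_def by simp
    qed
    then show ?thesis unfolding eq W_def by auto
  qed
  have WV: "W \<subseteq> ?V" unfolding W_def using meval_vec_carrier[OF A v(1)] by auto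
  have Wall: "W = range (\<lambda>r. meval k A r *\<^sub>v v)" using clos unfolding W_def by auto
  have W0: "0\<^sub>v k \<in> W"
  proof -
    have "meval k A 0 *\<^sub>v v = 0\<^sub>v k" using v by (intro eq_vecI) (auto simp: scalar_prod_def)
    then show ?thesis using clos[of 0] by simp
  qed
  have Wv: "v \<in> W" using clos[of 1] v by (simp add: meval_1[OF A])
  have Wd: "x - y \<in> W" if "x \<in> W" "y \<in> W" for x y
  proof -
    have "x \<in> range (\<lambda>r. meval k A r *\<^sub>v v)" "y \<in> range (\<lambda>r. meval k A r *\<^sub>v v)"
      using that Wall by auto
    then obtain r1 r2 where x: "x = meval k A r1 *\<^sub>v v" and y: "y = meval k A r2 *\<^sub>v v"
      by blast
    have "x - y = meval k A (r1 - r2) *\<^sub>v v"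
      unfolding x y meval_diff[OF A]
      by (rule minus_mult_distrib_mat_vec[symmetric, OF meval_carrier[OF A] meval_carrier[OF A] v(1)])
    then show ?thesis using clos by simp
  qed
  have WA: "A *\<^sub>v x \<in> W" if "x \<in> W" for x
  proof -
    have "x \<in> range (\<lambda>r. meval k A r *\<^sub>v v)" using that Wall by auto
    then obtain r where x: "x = meval k A r *\<^sub>v v" by blast
    have "A *\<^sub>v x = meval k A (monom 1 1 * r) *\<^sub>v v"
      unfolding x meval_mult_vec[OF A v(1)] meval_x[OF A] ..
    then show ?thesis using clos by simp
  qed
  have finW: "finite W" by (rule finite_subset[OF WV finite_carrier_vec])
  have c1: "1 < card W"
  proof -
    have "{0\<^sub>v k, v} \<subseteq> W" using W0 Wv by auto
    then have "card {0\<^sub>v k, v} \<le> card W" using finW by (rule card_mono[rotated])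
    then show ?thesis using v by auto
  qed
  have p1: "1 < CARD('p)" using prime_card[where 'a='p] prime_gt_1_nat by blast
  have "card W \<le> card {r :: 'p mod_ring poly. degree r < d}"
    unfolding W_def using card_deg_less[of d] by (intro card_image_le) auto
  also have "\<dots> \<le> CARD('p) ^ d" using card_deg_less[of d] by auto
  also have "\<dots> < CARD('p) ^ k" using d_def dqk p1 by (intro power_strict_increasing) auto
  also have "\<dots> = card ?V" by (simp add: card_carrier_vec)
  finally have c2: "card W < card ?V" .
  show ?thesis by (rule blocks_imprimitive[OF A inv e WV W0 Wd WA c1 c2])
qed

lemma meval_xpow: assumes A: "A \<in> carrier_mat n n"
  shows "meval n A (monom 1 1 ^ a) = A ^\<^sub>m a"
  by (simp only: meval_power[OF A] meval_x[OF A])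

lemma pow_vec_eq: fixes A :: "'p::prime_card mod_ring mat"
  assumes A: "A \<in> carrier_mat n n" and irr: "irreducible (char_poly A)"
    and v: "v \<in> carrier_vec n" "v \<noteq> 0\<^sub>v n" and eq: "(A ^\<^sub>m a) *\<^sub>v v = (A ^\<^sub>m b) *\<^sub>v v"
  shows "A ^\<^sub>m a = A ^\<^sub>m b"
proof -
  let ?r = "monom 1 1 ^ a - monom 1 1 ^ b :: 'p mod_ring poly"
  have "meval n A ?r *\<^sub>v v = (A ^\<^sub>m a - A ^\<^sub>m b) *\<^sub>v v"
    by (simp only: meval_diff[OF A] meval_xpow[OF A])
  also have "\<dots> = (A ^\<^sub>m a) *\<^sub>v v - (A ^\<^sub>m b) *\<^sub>v v"
    by (rule minus_mult_distrib_mat_vec[OF pow_carrier_mat[OF A] pow_carrier_mat[OF A] v(1)])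
  also have "\<dots> = 0\<^sub>v n" unfolding eq using A v by (intro eq_vecI) auto
  finally have "meval n A ?r = 0\<^sub>m n n" by (rule kernel_zero[OF A irr v])
  then have z: "A ^\<^sub>m a - A ^\<^sub>m b = 0\<^sub>m n n" by (simp only: meval_diff[OF A] meval_xpow[OF A])
  show ?thesis
  proof (rule eq_matI)
    fix i j assume ij: "i < dim_row (A ^\<^sub>m b)" "j < dim_col (A ^\<^sub>m b)"
    then have "i < n" "j < n" using pow_carrier_mat[OF A, of b] by auto
    then show "(A ^\<^sub>m a) $$ (i,j) = (A ^\<^sub>m b) $$ (i,j)"
      using arg_cong[OF z, of "\<lambda>M. M $$ (i,j)"] A by simp
  qed (use A in auto)
qed

lemma one_pow_mat: "(1\<^sub>m n :: 'a::semiring_1 mat) ^\<^sub>m i = 1\<^sub>m n"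
  by (induct i) auto

lemma inv_pow_mat: fixes A :: "'a::comm_ring_1 mat"
  assumes A: "A \<in> carrier_mat n n" and B: "B \<in> carrier_mat n n" and BA: "B * A = 1\<^sub>m n"
  shows "B ^\<^sub>m a * A ^\<^sub>m a = 1\<^sub>m n"
proof (induct a)
  case 0 then show ?case using A B by simp
next
  case (Suc a)
  have e1: "B ^\<^sub>m Suc a = B ^\<^sub>m a * B" by simp
  have "B ^\<^sub>m Suc a * A ^\<^sub>m Suc a = (B ^\<^sub>m a * B) * (A * A ^\<^sub>m a)"
    unfolding e1 pow_mat_Suc_left[OF A] ..
  also have "\<dots> = B ^\<^sub>m a * ((B * A) * A ^\<^sub>m a)"
    using A B by (simp add: assoc_mult_mat[of _ n n _ n _ n])
  also have "\<dots> = 1\<^sub>m n" using A B Suc by (simp add: BA)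
  finally show ?case .
qed

lemma pow_cancel: fixes A :: "'a::comm_ring_1 mat"
  assumes A: "A \<in> carrier_mat n n" and B: "B \<in> carrier_mat n n" and BA: "B * A = 1\<^sub>m n"
    and eq: "A ^\<^sub>m a = A ^\<^sub>m b" and ab: "a \<le> b"
  shows "A ^\<^sub>m (b - a) = 1\<^sub>m n"
proof -
  have "1\<^sub>m n = B ^\<^sub>m a * A ^\<^sub>m b" using inv_pow_mat[OF A B BA, of a] eq by simp
  also have "A ^\<^sub>m b = A ^\<^sub>m a * A ^\<^sub>m (b - a)" using pow_mat_add[OF A, of a "b - a"] ab by simp
  also have "B ^\<^sub>m a * (A ^\<^sub>m a * A ^\<^sub>m (b - a)) = (B ^\<^sub>m a * A ^\<^sub>m a) * A ^\<^sub>m (b - a)"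
    using A B by (simp add: assoc_mult_mat[of _ n n _ n _ n])
  also have "\<dots> = A ^\<^sub>m (b - a)" using inv_pow_mat[OF A B BA, of a] A by simp
  finally show ?thesis by simp
qed

lemma pow_vec_Suc: assumes A: "A \<in> carrier_mat n n" and x: "x \<in> carrier_vec n"
  shows "(A ^\<^sub>m Suc i) *\<^sub>v x = A *\<^sub>v ((A ^\<^sub>m i) *\<^sub>v x)"
  unfolding pow_mat_Suc_left[OF A] by (rule assoc_mult_mat_vec[OF A pow_carrier_mat[OF A] x])

lemma pow_vec_add: assumes A: "A \<in> carrier_mat n n" and x: "x \<in> carrier_vec n"
  shows "(A ^\<^sub>m (l + i)) *\<^sub>v x = (A ^\<^sub>m l) *\<^sub>v ((A ^\<^sub>m i) *\<^sub>v x)"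
  unfolding pow_mat_add[OF A] by (rule assoc_mult_mat_vec[OF pow_carrier_mat[OF A] pow_carrier_mat[OF A] x])

lemma orbit_count: fixes A :: "'p::prime_card mod_ring mat"
  assumes A: "A \<in> carrier_mat n n" and irr: "irreducible (char_poly A)"
    and B: "B \<in> carrier_mat n n" and BA: "B * A = 1\<^sub>m n"
    and XV: "X \<subseteq> carrier_vec n" and X0: "0\<^sub>v n \<notin> X"
    and XA: "\<And>x. x \<in> X \<Longrightarrow> A *\<^sub>v x \<in> X" and Xne: "X \<noteq> {}"
  shows "A ^\<^sub>m card X = 1\<^sub>m n"
proof -
  let ?V = "carrier_vec n :: 'p mod_ring vec set"
  have finX: "finite X" by (rule finite_subset[OF XV finite_carrier_vec])
  obtain v where vX: "v \<in> X" using Xne by auto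
  have vV: "v \<in> ?V" and v0: "v \<noteq> 0\<^sub>v n" using vX XV X0 by auto
  have powX: "(A ^\<^sub>m i) *\<^sub>v x \<in> X" if x: "x \<in> X" for x i
  proof (induct i)
    case 0 then show ?case using x XV A by auto
  next
    case (Suc i) then show ?case using pow_vec_Suc[OF A, of x i] x XV XA by auto
  qed
  have ex: "\<exists>t. 0 < t \<and> A ^\<^sub>m t = 1\<^sub>m n"
  proof -
    let ?f = "\<lambda>i. (A ^\<^sub>m i) *\<^sub>v v"
    have sub: "?f ` {..card ?V} \<subseteq> ?V" using powX[OF vX] XV by auto
    have "\<not> inj_on ?f {..card ?V}"
    proof
      assume "inj_on ?f {..card ?V}"
      from card_inj_on_le[OF this sub finite_carrier_vec] show False by simp
    qed
    then obtain i l where il: "i \<noteq> l" and eq: "?f i = ?f l" unfolding inj_on_def by auto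
    have "\<exists>a b. a < b \<and> ?f a = ?f b"
    proof (cases "i < l")
      case True then show ?thesis using eq by auto
    next
      case False then have "l < i" using il by auto
      then show ?thesis using eq by metis
    qed
    then obtain a b where ab: "a < b" and eq: "?f a = ?f b" by blast
    have "A ^\<^sub>m a = A ^\<^sub>m b" by (rule pow_vec_eq[OF A irr vV v0 eq])
    from pow_cancel[OF A B BA this] ab have "A ^\<^sub>m (b - a) = 1\<^sub>m n" by simp
    then show ?thesis using ab by (intro exI[of _ "b - a"]) auto
  qed
  define d where "d = (LEAST t. 0 < t \<and> A ^\<^sub>m t = 1\<^sub>m n)"
  have d0: "0 < d" and Ad: "A ^\<^sub>m d = 1\<^sub>m n"
    using LeastI_ex[OF ex] unfolding d_def by auto
  have dmin: "A ^\<^sub>m t \<noteq> 1\<^sub>m n" if "0 < t" "t < d" for t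
    using not_less_Least[of t "\<lambda>t. 0 < t \<and> A ^\<^sub>m t = 1\<^sub>m n"] that unfolding d_def by auto
  have Adq: "A ^\<^sub>m (d * q) = 1\<^sub>m n" for q
    by (simp add: pow_mat_mult[OF A] Ad one_pow_mat)
  have powmod: "A ^\<^sub>m l = A ^\<^sub>m (l mod d)" for l
  proof -
    have "A ^\<^sub>m l = A ^\<^sub>m (d * (l div d) + l mod d)" by simp
    also have "\<dots> = A ^\<^sub>m (d * (l div d)) * A ^\<^sub>m (l mod d)" by (rule pow_mat_add[OF A])
    also have "\<dots> = A ^\<^sub>m (l mod d)" using A by (simp add: Adq)
    finally show ?thesis .
  qed
  define Orb where "Orb x = (\<lambda>i. (A ^\<^sub>m i) *\<^sub>v x) ` {..<d}" for x
  have orb_all: "(A ^\<^sub>m l) *\<^sub>v x \<in> Orb x" for x l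
    unfolding Orb_def using powmod[of l] d0 by (intro image_eqI[of _ _ "l mod d"]) auto
  have self: "x \<in> Orb x" if "x \<in> ?V" for x
    using orb_all[of 0 x] that A by simp
  have sub: "Orb z \<subseteq> Orb x" if x: "x \<in> ?V" and z: "z \<in> Orb x" for x z
  proof
    fix y assume "y \<in> Orb z"
    then obtain l where y: "y = (A ^\<^sub>m l) *\<^sub>v z" unfolding Orb_def by auto
    obtain i where zi: "z = (A ^\<^sub>m i) *\<^sub>v x" using z unfolding Orb_def by auto
    have "y = (A ^\<^sub>m (l + i)) *\<^sub>v x" unfolding y zi by (rule pow_vec_add[OF A x, symmetric])
    then show "y \<in> Orb x" using orb_all by simp
  qed
  have bck: "x \<in> Orb z" if x: "x \<in> ?V" and z: "z \<in> Orb x" for x z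
  proof -
    obtain i where i: "i < d" and zi: "z = (A ^\<^sub>m i) *\<^sub>v x" using z unfolding Orb_def by auto
    have "(A ^\<^sub>m (d - i)) *\<^sub>v z = (A ^\<^sub>m (d - i + i)) *\<^sub>v x" unfolding zi by (rule pow_vec_add[OF A x, symmetric])
    also have "\<dots> = x" using i Ad x by simp
    finally show ?thesis using orb_all[of "d - i" z] by simp
  qed
  have cardO: "card (Orb x) = d" if x: "x \<in> X" for x
  proof -
    have xV: "x \<in> ?V" and x0: "x \<noteq> 0\<^sub>v n" using x XV X0 by auto
    have "inj_on (\<lambda>i. (A ^\<^sub>m i) *\<^sub>v x) {..<d}"
    proof
      fix i l assume i: "i \<in> {..<d}" and l: "l \<in> {..<d}" and eq: "(A ^\<^sub>m i) *\<^sub>v x = (A ^\<^sub>m l) *\<^sub>v x"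
      have gen: False if ab: "a < b" "b < d" and eq: "(A ^\<^sub>m a) *\<^sub>v x = (A ^\<^sub>m b) *\<^sub>v x" for a b
      proof -
        have "A ^\<^sub>m a = A ^\<^sub>m b" by (rule pow_vec_eq[OF A irr xV x0 eq])
        from pow_cancel[OF A B BA this] ab have "A ^\<^sub>m (b - a) = 1\<^sub>m n" by simp
        with dmin[of "b - a"] ab show False by linarith
      qed
      show "i = l"
      proof (rule ccontr)
        assume "i \<noteq> l"
        then have "i < l \<or> l < i" by auto
        then show False using gen[of i l] gen[of l i] eq i l by auto
      qed
    qed
    then show ?thesis unfolding Orb_def by (simp add: card_image)
  qed
  let ?C = "Orb ` X"
  have UC: "\<Union> ?C = X"
  proof
    show "\<Union> ?C \<subseteq> X" unfolding Orb_def using powX by auto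
    show "X \<subseteq> \<Union> ?C" using self XV by blast
  qed
  have "d * card ?C = card (\<Union> ?C)"
  proof (rule card_partition)
    show "finite ?C" using finX by simp
    show "finite (\<Union> ?C)" using UC finX by simp
    show "card c = d" if "c \<in> ?C" for c using that cardO by auto
    show "c1 \<inter> c2 = {}" if c: "c1 \<in> ?C" "c2 \<in> ?C" "c1 \<noteq> c2" for c1 c2
    proof (rule ccontr)
      assume "c1 \<inter> c2 \<noteq> {}"
      then obtain z where z: "z \<in> c1" "z \<in> c2" by auto
      obtain x y where x: "x \<in> X" "c1 = Orb x" and y: "y \<in> X" "c2 = Orb y" using c by auto
      have xV: "x \<in> ?V" and yV: "y \<in> ?V" using x y XV by auto
      have zV: "z \<in> ?V" using z x powX unfolding Orb_def using XV by auto
      have "Orb x = Orb z" using sub[OF xV, of z] sub[OF zV bck[OF xV]] z x by auto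
      moreover have "Orb y = Orb z" using sub[OF yV, of z] sub[OF zV bck[OF yV]] z y by auto
      ultimately show False using c x y by auto
    qed
  qed
  then have "card X = d * card ?C" using UC by simp
  then show ?thesis using Adq by simp
qed

lemma ab_helper: fixes x y z :: "'a::ab_group_add" assumes "x - y = - z" shows "x + z = y"
proof -
  have "z = - (x - y)" using assms by simp
  then show ?thesis by simp
qed

lemma dir2: fixes A :: "'p::prime_card mod_ring mat"
  assumes A: "A \<in> carrier_mat k k" and inv: "invertible_mat A"
    and e: "e \<in> carrier_vec k" and irr: "irreducible (char_poly A)"
    and imp: "imprimitive_perm (\<lambda>x. A *\<^sub>v x + e) (carrier_vec k)"
  shows False
proof -
  let ?V = "carrier_vec k :: 'p mod_ring vec set"
  let ?g = "\<lambda>x. A *\<^sub>v x + e"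
  let ?p = "CARD('p)"
  have pprime: "prime ?p" by (rule prime_card)
  have p1: "1 < ?p" using pprime prime_gt_1_nat by blast
  obtain P m where part: "partition_on ?V P" and cardB: "\<forall>B\<in>P. card B = m"
    and m1: "1 < m" and mV: "m < card ?V" and gP: "\<forall>B\<in>P. ?g ` B \<in> P"
    using imp unfolding imprimitive_perm_def by blast
  have UP: "\<Union>P = ?V" using partition_onD1[OF part] by simp
  have disj: "disjoint P" using partition_onD2[OF part] .
  have finV: "finite ?V" by simp
  have finP: "finite P"
  proof -
    have "P \<subseteq> Pow ?V" using UP by auto
    then show ?thesis using finV by (meson finite_Pow_iff finite_subset)
  qed
  have "m * card P = card (\<Union>P)"
    by (rule card_partition) (use finP UP finV cardB disjointD[OF disj] in auto)
  then have "m dvd ?p ^ k" using UP by (simp add: card_carrier_vec) (metis dvd_triv_left)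
  then obtain j where jk: "j \<le> k" and mj: "m = ?p ^ j"
    using divides_primepow_nat[OF pprime] by blast
  have j1: "1 \<le> j" using m1 mj by (cases j) auto
  have jlt: "j < k"
    using mV mj p1 power_less_imp_less_exp[OF p1, of j k] by (simp add: card_carrier_vec)
  have degc: "degree (char_poly A) = k" using degree_monic_char_poly[OF A] by auto
  let ?r1 = "monom 1 1 - 1 :: 'p mod_ring poly"
  have r1: "?r1 = [:-1, 1:]"
    by (rule poly_eqI) (auto simp: coeff_monom coeff_pCons split: nat.split)
  have ndvd1: "\<not> char_poly A dvd ?r1"
  proof
    assume "char_poly A dvd ?r1"
    from dvd_imp_degree_le[OF this] have "degree (char_poly A) \<le> degree ?r1" unfolding r1 by simp
    then show False using degc j1 jlt unfolding r1 by simp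
  qed
  obtain B1 where B1: "B1 \<in> carrier_mat k k" and B1r: "B1 * meval k A ?r1 = 1\<^sub>m k"
    using inv_or_dvd[OF A irr ndvd1] by blast
  have mr1: "meval k A ?r1 = A - 1\<^sub>m k" by (simp only: meval_diff[OF A] meval_x[OF A] meval_1[OF A])
  have AmI: "A - 1\<^sub>m k \<in> carrier_mat k k" by (rule minus_carrier_mat[OF one_carrier_mat])
  have rinv: "(A - 1\<^sub>m k) * B1 = 1\<^sub>m k"
    by (rule mat_mult_left_right_inverse[OF B1 AmI]) (use B1r mr1 in simp)
  define f where "f = B1 *\<^sub>v (- e)"
  have fV: "f \<in> ?V" unfolding f_def using B1 e by simp
  have "(A - 1\<^sub>m k) *\<^sub>v f = ((A - 1\<^sub>m k) * B1) *\<^sub>v (- e)"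
    unfolding f_def using assoc_mult_mat_vec[OF AmI B1, of "- e"] e by simp
  also have "\<dots> = - e" using rinv e by simp
  finally have eqf: "(A - 1\<^sub>m k) *\<^sub>v f = - e" .
  have "(A - 1\<^sub>m k) *\<^sub>v f = A *\<^sub>v f - f"
    using minus_mult_distrib_mat_vec[OF A one_carrier_mat fV] fV by simp
  with eqf have eqf2: "A *\<^sub>v f - f = - e" by simp
  have gf: "?g f = f"
  proof (rule eq_vecI)
    fix i assume "i < dim_vec f"
    then have i: "i < k" using fV by simp
    have "(A *\<^sub>v f - f) $ i = (- e) $ i" using eqf2 by simp
    then have "(A *\<^sub>v f) $ i - f $ i = - (e $ i)" using i A fV e by simp
    then have "(A *\<^sub>v f) $ i + e $ i = f $ i" by (rule ab_helper)
    then show "?g f $ i = f $ i" using i A fV e by simp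
  qed (use A e fV in simp)
  obtain B0 where B0: "B0 \<in> P" and fB0: "f \<in> B0" using UP fV by auto
  have B0V: "B0 \<subseteq> ?V" using B0 UP by auto
  have gB0: "?g ` B0 = B0"
  proof (rule ccontr)
    assume ne: "?g ` B0 \<noteq> B0"
    have "f \<in> ?g ` B0" using gf fB0 by (metis image_eqI)
    then have "f \<in> ?g ` B0 \<inter> B0" using fB0 by simp
    moreover have "?g ` B0 \<inter> B0 = {}" using disjointD[OF disj gP[rule_format, OF B0] B0 ne] .
    ultimately show False by simp
  qed
  define S where "S = (\<lambda>y. y - f) ` B0"
  have SV: "S \<subseteq> ?V" unfolding S_def using B0V fV by auto
  have cardS: "card S = m"
  proof -
    have "inj_on (\<lambda>y. y - f) B0"
    proof
      fix y y' assume "y \<in> B0" "y' \<in> B0" "y - f = y' - f"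
      then show "y = y'" using vec_id1[OF fV, of y] vec_id1[OF fV, of y'] B0V by auto
    qed
    then show ?thesis unfolding S_def using cardB B0 by (simp add: card_image)
  qed
  have S0: "0\<^sub>v k \<in> S"
  proof -
    have "f - f = 0\<^sub>v k" using fV by (intro eq_vecI) auto
    then show ?thesis unfolding S_def using fB0 by (metis image_eqI)
  qed
  have SA: "A *\<^sub>v s \<in> S" if s: "s \<in> S" for s
  proof -
    obtain y where y: "y \<in> B0" and sy: "s = y - f" using s unfolding S_def by auto
    have yV: "y \<in> ?V" using y B0V by auto
    have "A *\<^sub>v s = ?g y - ?g f" unfolding sy by (rule vec_id4[OF A fV yV e, symmetric])
    also have "\<dots> = ?g y - f" using gf by simp
    finally show ?thesis unfolding S_def using gB0 y by auto
  qed
  define X where "X = S - {0\<^sub>v k}"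
  have finS: "finite S" by (rule finite_subset[OF SV finite_carrier_vec])
  have cardX: "card X = m - 1" unfolding X_def using S0 cardS finS by simp
  have XV: "X \<subseteq> ?V" and X0: "0\<^sub>v k \<notin> X" unfolding X_def using SV by auto
  have Xne: "X \<noteq> {}" using cardX m1 by auto
  have XA: "A *\<^sub>v x \<in> X" if x: "x \<in> X" for x
  proof -
    have xV: "x \<in> ?V" and x0: "x \<noteq> 0\<^sub>v k" using x XV X0 by auto
    have "A *\<^sub>v x \<noteq> 0\<^sub>v k"
    proof
      assume "A *\<^sub>v x = 0\<^sub>v k"
      then have "A *\<^sub>v x = A *\<^sub>v 0\<^sub>v k" using A by (simp add: mult_zero_vec_mat)
      from mat_vec_inj[OF A inv xV _ this] x0 show False by simp
    qed
    then show ?thesis using SA x unfolding X_def by auto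
  qed
  obtain B where B: "B \<in> carrier_mat k k" and BA: "B * A = 1\<^sub>m k" using invertible_inv[OF A inv] by blast
  have powc: "A ^\<^sub>m (m - 1) = 1\<^sub>m k"
    using orbit_count[OF A irr B BA XV X0 XA Xne] cardX by simp
  have "A ^\<^sub>m m = A ^\<^sub>m (m - 1) * A ^\<^sub>m 1" using pow_mat_add[OF A, of "m - 1" 1] m1 by simp
  also have "\<dots> = A" using powc A by simp
  finally have Am: "A ^\<^sub>m (?p ^ j) = A" using mj by simp
  let ?r = "monom 1 1 ^ (?p ^ j) - monom 1 1 :: 'p mod_ring poly"
  have mr: "meval k A ?r = 0\<^sub>m k k"
  proof -
    have "meval k A ?r = A - A" by (simp only: meval_diff[OF A] meval_xpow[OF A] meval_x[OF A] Am)
    also have "\<dots> = 0\<^sub>m k k" using A by (intro eq_matI) auto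
    finally show ?thesis .
  qed
  obtain v where vX: "v \<in> X" using Xne by auto
  have vV: "v \<in> ?V" and v0: "v \<noteq> 0\<^sub>v k" using vX XV X0 by auto
  have "meval k A ?r *\<^sub>v v = 0\<^sub>v k" unfolding mr using vV by (intro eq_vecI) (auto simp: scalar_prod_def)
  from kernel_dvd[OF A irr vV v0 this] have "char_poly A dvd ?r" .
  with degree_divisor2[OF irr degc j1 jlt] show False by simp
qed

theorem mainTheorem5:
  fixes A :: "'p::prime_card mod_ring mat" and e :: "'p mod_ring vec" and k :: nat
  assumes "k \<ge> 1"
    and "A \<in> carrier_mat k k" and "invertible_mat A"
    and "e \<in> carrier_vec k"
  shows "imprimitive_perm (\<lambda>x. A *\<^sub>v x + e) (carrier_vec k) \<longleftrightarrow> \<not> irreducible (char_poly A)"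
proof
  assume imp: "imprimitive_perm (\<lambda>x. A *\<^sub>v x + e) (carrier_vec k)"
  show "\<not> irreducible (char_poly A)"
  proof
    assume "irreducible (char_poly A)"
    from dir2[OF assms(2,3,4) this imp] show False .
  qed
next
  assume "\<not> irreducible (char_poly A)"
  from dir1[OF assms this] show "imprimitive_perm (\<lambda>x. A *\<^sub>v x + e) (carrier_vec k)" .
qed

end
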